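(* Let $\rho\geqslant\sqrt7$, and set $c=\frac14(\rho+\rho^{-1})^2$, $d=\frac12(\rho^2-4-\rho^{-2})$. For an integer $n$ define $$A_n=\rho^{2n}-nc-2n-n^2d-(n|n|-|n|)d,\quad B_n=\rho^{-2n}-nc+2n+n^2d-(n|n|-|n|)d,\quad C_n=1-nc-(n|n|-|n|)d,$$ and the Hermitian form $Q_n(\xi,\zeta)=A_n|\xi|^2+B_n|\zeta|^2+2C_n\operatorname{Re}(\xi\bar\zeta)$ on $\mathbb C^2$. Then for every integer $n\neq0,1$ and all $\xi,\zeta\in\mathbb C$, $Q_n(\xi,\zeta)>0$ unless $\xi=\zeta=0$. *)

theory Defs
  imports Complex_Main
begin

definition cc :: "real \<Rightarrow> real" where
  "cc \<rho> = (1/4) * (\<rho> + inverse \<rho>)^2"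

definition dd :: "real \<Rightarrow> real" where
  "dd \<rho> = (1/2) * (\<rho>^2 - 4 - inverse \<rho> ^ 2)"

definition An :: "real \<Rightarrow> int \<Rightarrow> real" where
  "An \<rho> n = \<rho> powi (2*n) - of_int n * cc \<rho> - 2 * of_int n - (of_int n)^2 * dd \<rho>
     - of_int (n * \<bar>n\<bar> - \<bar>n\<bar>) * dd \<rho>"

definition Bn :: "real \<Rightarrow> int \<Rightarrow> real" where
  "Bn \<rho> n = \<rho> powi (-2*n) - of_int n * cc \<rho> + 2 * of_int n + (of_int n)^2 * dd \<rho>
     - of_int (n * \<bar>n\<bar> - \<bar>n\<bar>) * dd \<rho>"

definition Cn :: "real \<Rightarrow> int \<Rightarrow> real" where
  "Cn \<rho> n = 1 - of_int n * cc \<rho> - of_int (n * \<bar>n\<bar> - \<bar>n\<bar>) * dd \<rho>"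

definition Qn :: "real \<Rightarrow> int \<Rightarrow> complex \<Rightarrow> complex \<Rightarrow> real" where
  "Qn \<rho> n \<xi> \<zeta> = An \<rho> n * (cmod \<xi>)^2 + Bn \<rho> n * (cmod \<zeta>)^2
     + 2 * Cn \<rho> n * Re (\<xi> * cnj \<zeta>)"

end

theory Submission imports Defs begin
lemma quad_pos:
  fixes A B C :: real and x z :: complex
  assumes "A > 0" "B > 0" "C^2 < A*B" "\<not> (x = 0 \<and> z = 0)"
  shows "A * (cmod x)^2 + B * (cmod z)^2 + 2 * C * Re (x * cnj z) > 0"
proof -
  define a where "a = cmod x"
  define b where "b = cmod z"
  have ab: "\<bar>Re (x * cnj z)\<bar> \<le> a * b"
    unfolding a_def b_def by (metis abs_Re_le_cmod complex_mod_cnj norm_mult)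
  have "C * Re (x * cnj z) \<ge> - (\<bar>C\<bar> * (a*b))"
  proof -
    have "\<bar>C * Re (x * cnj z)\<bar> \<le> \<bar>C\<bar> * (a*b)"
      using ab by (simp add: abs_mult mult_left_mono)
    thus ?thesis by linarith
  qed
  moreover have "A * a^2 + B * b^2 - 2 * \<bar>C\<bar> * a * b > 0"
  proof (cases "b = 0")
    case True
    then have "a > 0" using assms(4) unfolding a_def b_def by auto
    then show ?thesis using True assms(1) by simp
  next
    case False
    then have b: "b > 0" unfolding b_def by simp
    have "A * (A * a^2 + B * b^2 - 2 * \<bar>C\<bar> * a * b) = (A*a - \<bar>C\<bar>*b)^2 + (A*B - C^2) * b^2"
      by (simp add: algebra_simps power2_eq_square)
    moreover have "(A*B - C^2) * b^2 > 0" using assms(3) b by simp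
    moreover have "(A*a - \<bar>C\<bar>*b)^2 \<ge> 0" by simp
    ultimately have "A * (A * a^2 + B * b^2 - 2 * \<bar>C\<bar> * a * b) > 0" by linarith
    then show ?thesis using assms(1) by (simp add: zero_less_mult_iff)
  qed
  ultimately show ?thesis unfolding a_def b_def by linarith
qed

lemma pw1:
  fixes r :: real assumes r: "r \<ge> 7" and k: "k \<ge> 4"
  shows "r^k \<ge> 4 * (real k)^3 * r"
  using k
proof (induction k rule: dec_induct)
  case base
  have "r^3 \<ge> 7^3" using r by (intro power_mono) auto
  then have "r^3 * r \<ge> 256 * r" using r by (intro mult_right_mono) auto
  then show ?case by (simp add: power_numeral_reduce mult.commute)
next
  case (step k)
  have kk: "real k \<ge> 4" using step by simp
  have "28 * (real k)^3 \<ge> 4 * (real k + 1)^3"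
  proof -
    have "(real k + 1) \<le> 5/4 * real k" using kk by simp
    then have "(real k + 1)^3 \<le> (5/4 * real k)^3" by (intro power_mono) auto
    moreover have "(5/4 * real k)^3 = 125/64 * (real k)^3" by (simp add: power3_eq_cube)
    moreover have "(real k)^3 \<ge> 0" by simp
    ultimately show ?thesis by linarith
  qed
  have "r^(Suc k) = r * r^k" by simp
  also have "\<dots> \<ge> r * (4 * (real k)^3 * r)" using step r by (intro mult_left_mono) auto
  moreover have "r * (4 * (real k)^3 * r) \<ge> 7 * (4 * (real k)^3 * r)" using r kk
    by (intro mult_right_mono) auto
  moreover have "7 * (4 * (real k)^3 * r) \<ge> 4 * (real (Suc k))^3 * r"
    using mult_right_mono[OF \<open>28 * (real k)^3 \<ge> 4 * (real k + 1)^3\<close>, of r] r by (simp add: algebra_simps)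
  ultimately show ?case by linarith
qed

lemma pw2:
  fixes r :: real assumes r: "r \<ge> 7" and k: "k \<ge> 3"
  shows "5 * r^k \<ge> 7 * (real k)^3 * r"
  using k
proof (induction k rule: dec_induct)
  case base
  have "r^2 \<ge> 7^2" using r by (intro power_mono) auto
  then have "5 * r^2 * r \<ge> 7 * 27 * r" using r by (intro mult_right_mono) auto
  then show ?case by (simp add: power_numeral_reduce mult.commute mult.left_commute)
next
  case (step k)
  have kk: "real k \<ge> 3" using step by simp
  have "7 * (real k)^3 \<ge> (real k + 1)^3"
  proof -
    have "(real k + 1) \<le> 4/3 * real k" using kk by simp
    then have "(real k + 1)^3 \<le> (4/3 * real k)^3" by (intro power_mono) auto
    moreover have "(4/3 * real k)^3 = 64/27 * (real k)^3" by (simp add: power3_eq_cube)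
    moreover have "(real k)^3 \<ge> 0" by simp
    ultimately show ?thesis by linarith
  qed
  have "5 * r^(Suc k) = r * (5 * r^k)" by simp
  also have "\<dots> \<ge> r * (7 * (real k)^3 * r)" using step r by (intro mult_left_mono) auto
  moreover have "r * (7 * (real k)^3 * r) \<ge> 7 * (7 * (real k)^3 * r)" using r kk
    by (intro mult_right_mono) auto
  moreover have "7 * (7 * (real k)^3 * r) \<ge> 7 * (real (Suc k))^3 * r"
    using mult_right_mono[OF \<open>7 * (real k)^3 \<ge> (real k + 1)^3\<close>, of r] r by (simp add: algebra_simps)
  ultimately show ?case by linarith
qed

lemma poly_p2: fixes r :: real assumes "r \<ge> 7"
  shows "(r^2-7/2*r+7)*((r-17/7)/2) - (3/2*r-4)^2 > 0"
proof -
  define t where "t = r - 7"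
  have t: "t \<ge> 0" and r: "r = 7 + t" using assms unfolding t_def by auto
  have "(r^2-7/2*r+7)*((r-17/7)/2) - (3/2*r-4)^2 = 119/4 + 81/4*t + 37/7*t^2 + 1/2*t^3"
    unfolding r by (simp add: field_simps power2_eq_square power3_eq_cube)
  moreover have "t^2 \<ge> 0" "t^3 \<ge> 0" using t by auto
  ultimately show ?thesis using t by linarith
qed

lemma poly_p3: fixes r :: real assumes "r \<ge> 7"
  shows "(r^3 - 33/4*r + 45/2)*(3/4*(r-17/7)) - (15/4*r - 23/2)^2 > 0"
proof -
  define t where "t = r - 7"
  have t: "t \<ge> 0" and r: "r = 7 + t" using assms unfolding t_def by auto
  have "(r^3 - 33/4*r + 45/2)*(3/4*(r-17/7)) - (15/4*r - 23/2)^2 = 93809/112 + 66741/112*t + 162*t^2 + 537/28*t^3 + 3/4*t^4"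
    unfolding r by (simp add: field_simps power2_eq_square power3_eq_cube power4_eq_xxxx)
  moreover have "t^2 \<ge> 0" "t^3 \<ge> 0" "t^4 \<ge> 0" using t by auto
  ultimately show ?thesis using t by linarith
qed

lemma poly_n1: fixes r :: real assumes "r \<ge> 7"
  shows "((3*r+2)/4)*(11/4*r - 15/2 - 5/28) - (5/4*r - 5/2)^2 > 0"
proof -
  define t where "t = r - 7"
  have t: "t \<ge> 0" and r: "r = 7 + t" using assms unfolding t_def by auto
  have "((3*r+2)/4)*(11/4*r - 15/2 - 5/28) - (5/4*r - 5/2)^2 = 3077/112 + 993/112*t + 1/2*t^2"
    unfolding r by (simp add: field_simps power2_eq_square)
  moreover have "t^2 \<ge> 0" using t by auto
  ultimately show ?thesis using t by linarith
qed

lemma poly_n2: fixes r :: real assumes "r \<ge> 7"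
  shows "(3/2*r + 9/10)*(r^2 + 11/2*r - 23 - 9/14) - (7/2*r - 10)^2 > 0"
proof -
  define t where "t = r - 7"
  have t: "t \<ge> 0" and r: "r = 7 + t" using assms unfolding t_def by auto
  have "(3/2*r + 9/10)*(r^2 + 11/2*r - 23 - 9/14) - (7/2*r - 10)^2 = 72481/140 + 15161/70*t + 142/5*t^2 + 3/2*t^3"
    unfolding r by (simp add: field_simps power2_eq_square power3_eq_cube)
  moreover have "t^2 \<ge> 0" "t^3 \<ge> 0" using t by auto
  ultimately show ?thesis using t by linarith
qed

lemma pos_case:
  fixes r s :: real and k :: nat
  assumes r: "r \<ge> 7" and rs: "r * s = 1" and k: "k \<ge> 2"
  defines "c \<equiv> (r+2+s)/4" and "d \<equiv> (r-4-s)/2"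
  defines "A \<equiv> r^k - real k*c - 2*real k - (2*(real k)^2 - real k)*d"
    and "B \<equiv> s^k + real k*(d-c+2)"
    and "C \<equiv> 1 - real k*c - ((real k)^2 - real k)*d"
  shows "A > 0 \<and> B > 0 \<and> C^2 < A*B"
proof -
  have sr: "s = 1/r" using rs r by (simp add: field_simps)
  have s0: "s > 0" using r sr by simp
  have s7: "s \<le> 1/7" unfolding sr using r by (simp add: divide_left_mono frac_le)
  have sk: "s^k > 0" using s0 by simp
  have Bg: "B > real k*(d-c+2)" unfolding B_def using sk by simp
  consider "k = 2" | "k = 3" | "k \<ge> 4" using k by linarith
  then show ?thesis
  proof cases
    case 1
    have A0: "A \<ge> r^2-7/2*r+7" unfolding A_def c_def d_def 1 using s0 by (simp add: field_simps)
    have "real k*(d-c+2) \<ge> (r-17/7)/2" unfolding c_def d_def 1 using s0 s7 by (simp add: field_simps)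
    hence B0: "B \<ge> (r-17/7)/2" using Bg by linarith
    have C0: "\<bar>C\<bar> \<le> 3/2*r-4" unfolding C_def c_def d_def 1 using s0 s7 r by (simp add: field_simps)
    have "r^2 \<ge> 7*r" using r mult_right_mono[OF r, of r] by (simp add: power2_eq_square)
    hence p1: "r^2-7/2*r+7 > 0" using r by linarith
    have p2: "(r-17/7)/2 > 0" using r by simp
    have "C^2 \<le> (3/2*r-4)^2" using C0 by (metis abs_ge_zero power2_abs power_mono)
    moreover have "(r^2-7/2*r+7)*((r-17/7)/2) \<le> A * B" using A0 B0 p1 p2 by (intro mult_mono) auto
    ultimately show ?thesis using poly_p2[OF r] A0 B0 p1 p2 by linarith
  next
    case 2
    have A0: "A \<ge> r^3 - 33/4*r + 45/2" unfolding A_def c_def d_def 2 using s0 by (simp add: field_simps)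
    have "real k*(d-c+2) \<ge> 3/4*(r-17/7)" unfolding c_def d_def 2 using s0 s7 by (simp add: field_simps)
    hence B0: "B \<ge> 3/4*(r-17/7)" using Bg by linarith
    have C0: "\<bar>C\<bar> \<le> 15/4*r - 23/2" unfolding C_def c_def d_def 2 using s0 s7 r by (simp add: field_simps)
    have r3: "r^3 \<ge> 7^2 * r" using r power_mono[of 7 r 2] by (simp add: power3_eq_cube power2_eq_square mult_right_mono)
    have p1: "r^3 - 33/4*r + 45/2 > 0" using r r3 by simp
    have p2: "3/4*(r-17/7) > 0" using r by simp
    have "C^2 \<le> (15/4*r - 23/2)^2" using C0 by (metis abs_ge_zero power2_abs power_mono)
    moreover have "(r^3 - 33/4*r + 45/2)*(3/4*(r-17/7)) \<le> A * B" using A0 B0 p1 p2 by (intro mult_mono) auto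
    ultimately show ?thesis using poly_p3[OF r] A0 B0 p1 p2 by linarith
  next
    case 3
    define K where "K = real k"
    have K4: "K \<ge> 4" unfolding K_def using 3 by simp
    have R: "r^k \<ge> 4*K^3*r" unfolding K_def using pw1[OF r 3] .
    have c1: "c \<le> r/3" "c \<ge> 9/4" unfolding c_def using r s0 s7 by auto
    have d1: "d \<ge> 0" "d \<le> r/2" unfolding d_def using r s0 s7 by auto
    have be: "d - c + 2 \<ge> r/8" unfolding c_def d_def using r s0 s7 by (simp add: field_simps)
    define X where "X = K*c + (K^2-K)*d"
    have KK: "K^2 - K \<ge> 0" using K4 by (simp add: power2_eq_square)
    have Kc: "K*c \<le> K*(r/3)" using c1 K4 by (intro mult_left_mono) auto
    have Kd: "(K^2-K)*d \<le> (K^2-K)*(r/2)" using d1 KK by (intro mult_left_mono) auto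
    have Kd0: "(K^2-K)*d \<ge> 0" using d1 KK by simp
    have Kr: "K*r \<ge> 0" using K4 r by simp
    have X1: "X \<le> K^2*r/2" unfolding X_def using Kc Kd Kr by (simp add: algebra_simps)
    have Kc1: "K*c \<ge> 1" using c1 K4 mult_mono[of 1 K 1 c] by simp
    have X0: "X \<ge> 1" unfolding X_def using Kc1 Kd0 by simp
    have CX: "C = 1 - X" unfolding C_def X_def K_def by simp
    have C2: "C^2 < X^2" unfolding CX using X0 by (simp add: power2_eq_square algebra_simps)
    have X2: "X^2 \<le> (K^2*r/2)^2" using X0 X1 by (intro power_mono) auto
    have K2d: "(2*K^2-K)*d \<le> (2*K^2-K)*(r/2)" using d1 KK K4 by (intro mult_left_mono) auto
    have Kr2: "K*r \<ge> 2" using K4 r mult_mono[of 1 K 2 r] by simp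
    have K3: "K^2*r \<le> K^3*r" using K4 r by (intro mult_right_mono) (auto simp: power_increasing)
    have "K^2 \<ge> 4*K" using K4 mult_right_mono[OF K4, of K] by (simp add: power2_eq_square)
    moreover have "r*K^2 \<ge> 7*K^2" using r by (simp add: mult_right_mono)
    ultimately have K2r: "2*K \<le> r*K^2" using K4 by linarith
    have A1: "A \<ge> 2*K^3*r" unfolding A_def K_def[symmetric]
      using R Kc K2d K2r K3 Kr by (simp add: algebra_simps)
    have "K*(r/8) \<le> K*(d-c+2)" using be K4 by (intro mult_left_mono) auto
    hence B1: "B \<ge> K*r/8" using Bg unfolding K_def by linarith
    have pos1: "K*r/8 > 0" "2*K^3*r > 0" using K4 r by auto
    have "A*B \<ge> (2*K^3*r)*(K*r/8)" using A1 B1 pos1 by (intro mult_mono) linarith+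
    moreover have "(2*K^3*r)*(K*r/8) = (K^2*r/2)^2" by (simp add: power2_eq_square power3_eq_cube)
    ultimately show ?thesis using C2 X2 A1 B1 pos1 by linarith
  qed
qed

lemma neg_case:
  fixes r s :: real and k :: nat
  assumes r: "r \<ge> 7" and rs: "r * s = 1" and k: "k \<ge> 1"
  defines "c \<equiv> (r+2+s)/4" and "d \<equiv> (r-4-s)/2"
  defines "A \<equiv> s^k + real k*(c+2+d)"
    and "B \<equiv> r^k + real k*c - 2*real k + (2*(real k)^2 + real k)*d"
    and "C \<equiv> 1 + real k*c + ((real k)^2 + real k)*d"
  shows "A > 0 \<and> B > 0 \<and> C^2 < A*B"
proof -
  have sr: "s = 1/r" using rs r by (simp add: field_simps)
  have s0: "s > 0" using r sr by simp
  have s7: "s \<le> 1/7" unfolding sr using r by (simp add: divide_left_mono frac_le)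
  have sk: "s^k > 0" using s0 by simp
  have Ag: "A > real k*(c+2+d)" unfolding A_def using sk by simp
  consider "k = 1" | "k = 2" | "k \<ge> 3" using k by linarith
  then show ?thesis
  proof cases
    case 1
    have A0: "A \<ge> (3*r+2)/4" unfolding A_def c_def d_def 1 using s0 by (simp add: field_simps)
    have B0: "B \<ge> 11/4*r - 15/2 - 5/28" unfolding B_def c_def d_def 1 using s0 s7 by (simp add: field_simps)
    have C0: "C \<le> 5/4*r - 5/2" "C \<ge> 0" unfolding C_def c_def d_def 1 using s0 s7 r by (simp_all add: field_simps)
    have p1: "(3*r+2)/4 > 0" using r by simp
    have p2: "11/4*r - 15/2 - 5/28 > 0" using r by simp
    have "C^2 \<le> (5/4*r - 5/2)^2" using C0 by (intro power_mono) auto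
    moreover have "((3*r+2)/4)*(11/4*r - 15/2 - 5/28) \<le> A * B" using A0 B0 p1 p2 by (intro mult_mono) linarith+
    ultimately show ?thesis using poly_n1[OF r] A0 B0 p1 p2 by linarith
  next
    case 2
    have "real k*(c+2+d) \<ge> 3/2*r + 9/10" unfolding c_def d_def 2 using s0 s7 by (simp add: field_simps)
    hence A0: "A \<ge> 3/2*r + 9/10" using Ag by linarith
    have B0: "B \<ge> r^2 + 11/2*r - 23 - 9/14" unfolding B_def c_def d_def 2 using s0 s7 by (simp add: field_simps)
    have C0: "C \<le> 7/2*r - 10" "C \<ge> 0" unfolding C_def c_def d_def 2 using s0 s7 r by (simp_all add: field_simps)
    have p1: "3/2*r + 9/10 > 0" using r by simp
    have p2: "r^2 + 11/2*r - 23 - 9/14 > 0" using r zero_le_power2[of r] by linarith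
    have "C^2 \<le> (7/2*r - 10)^2" using C0 by (intro power_mono) auto
    moreover have "(3/2*r + 9/10)*(r^2 + 11/2*r - 23 - 9/14) \<le> A * B" using A0 B0 p1 p2 by (intro mult_mono) linarith+
    ultimately show ?thesis using poly_n2[OF r] A0 B0 p1 p2 by linarith
  next
    case 3
    define K where "K = real k"
    have K3: "K \<ge> 3" unfolding K_def using 3 by simp
    have R: "5 * r^k \<ge> 7*K^3*r" unfolding K_def using pw2[OF r 3] .
    have c1: "c \<le> r/3" "c \<ge> 2" unfolding c_def using r s0 s7 by auto
    have d1: "d \<ge> 0" "d \<le> r/2" unfolding d_def using r s0 s7 by auto
    have e: "c+2+d \<ge> 3*r/4" unfolding c_def d_def using r s0 s7 by (simp add: field_simps)
    have "K*(3*r/4) \<le> K*(c+2+d)" using e K3 by (intro mult_left_mono) auto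
    hence A1: "A \<ge> K*(3*r/4)" using Ag unfolding K_def by linarith
    have Kc2: "K*c \<ge> K*2" using c1 K3 by (intro mult_left_mono) auto
    have Kd0: "(2*K^2+K)*d \<ge> 0" using d1 K3 by simp
    have B1: "B \<ge> r^k" unfolding B_def K_def[symmetric] using Kc2 Kd0 by linarith
    have Kc: "K*c \<le> K*(r/3)" using c1 K3 by (intro mult_left_mono) auto
    have Kd: "(K^2+K)*d \<le> (K^2+K)*(r/2)" using d1 K3 by (intro mult_left_mono) auto
    have Kr: "K*r \<ge> 21" using K3 r mult_mono[of 3 K 7 r] by simp
    have KKr: "K^2*r \<ge> 3*(K*r)" using K3 r mult_right_mono[OF K3, of "K*r"] by (simp add: power2_eq_square algebra_simps)
    have C1: "C \<le> K^2*r" unfolding C_def K_def[symmetric] using Kc Kd Kr KKr by (simp add: algebra_simps)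
    have C0: "C \<ge> 0" unfolding C_def K_def[symmetric] using c1 d1 K3 by simp
    have C2: "C^2 \<le> (K^2*r)^2" using C0 C1 by (intro power_mono) auto
    have pos: "K*(3*r/4) > 0" "r^k > 0" using K3 r by auto
    have "A*B \<ge> (K*(3*r/4))*r^k" using A1 B1 pos by (intro mult_mono) linarith+
    moreover have "(K*(3*r/4))*(5*r^k) \<ge> (K*(3*r/4))*(7*K^3*r)" using R pos by (intro mult_left_mono) auto
    moreover have "(K*(3*r/4))*(7*K^3*r) = 21/4 * (K^2*r)^2" by (simp add: power2_eq_square power3_eq_cube)
    moreover have "(K^2*r)^2 > 0" using K3 r by simp
    ultimately have "C^2 < A*B" using C2 by (simp add: algebra_simps)
    then show ?thesis using A1 B1 pos by linarith
  qed
qed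

theorem lemma5p2:
  fixes \<rho> :: real and n :: int and \<xi> \<zeta> :: complex
  assumes "\<rho> \<ge> sqrt 7" and "n \<noteq> 0" and "n \<noteq> 1"
    and "\<not> (\<xi> = 0 \<and> \<zeta> = 0)"
  shows "Qn \<rho> n \<xi> \<zeta> > 0"
proof -
  define r where "r = \<rho>^2"
  define s where "s = inverse \<rho> ^ 2"
  have rho0: "\<rho> > 0" using assms(1) by (smt (verit) real_sqrt_gt_zero)
  have r7: "r \<ge> 7" unfolding r_def using power_mono[OF assms(1), of 2] by simp
  have rs: "r * s = 1" unfolding r_def s_def using rho0 by (simp add: power_mult_distrib[symmetric])
  have cc: "cc \<rho> = (r+2+s)/4" unfolding cc_def r_def s_def using rho0
    by (simp add: power2_eq_square field_simps)
  have dd: "dd \<rho> = (r-4-s)/2" unfolding dd_def r_def s_def by simp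
  have pw: "\<rho> powi (2 * int k) = r^k" for k
  proof -
    have "\<rho> powi (2 * int k) = \<rho> ^ (2*k)"
      by (metis of_nat_mult of_nat_numeral power_int_of_nat)
    also have "\<dots> = r^k" unfolding r_def by (simp add: power_mult)
    finally show ?thesis .
  qed
  have pwn: "\<rho> powi (- (2 * int k)) = s^k" for k
    unfolding power_int_minus pw s_def r_def by (simp add: power_inverse power_mult)
  have main: "An \<rho> n > 0 \<and> Bn \<rho> n > 0 \<and> (Cn \<rho> n)^2 < An \<rho> n * Bn \<rho> n"
  proof (cases "n \<ge> 2")
    case True
    define k where "k = nat n"
    have nk: "n = int k" and k2: "k \<ge> 2" unfolding k_def using True by auto
    have absn: "\<bar>n\<bar> = int k" using nk by simp
    have P: "r^k - real k*cc \<rho> - 2*real k - (2*(real k)^2 - real k)*dd \<rho> > 0 \<and>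
      s^k + real k*(dd \<rho> - cc \<rho> + 2) > 0 \<and>
      (1 - real k*cc \<rho> - ((real k)^2 - real k)*dd \<rho>)^2 <
        (r^k - real k*cc \<rho> - 2*real k - (2*(real k)^2 - real k)*dd \<rho>) * (s^k + real k*(dd \<rho> - cc \<rho> + 2))"
      unfolding cc dd using pos_case[OF r7 rs k2] by simp
    have eA: "An \<rho> n = r^k - real k*cc \<rho> - 2*real k - (2*(real k)^2 - real k)*dd \<rho>"
      unfolding An_def absn unfolding nk pw by (simp add: algebra_simps power2_eq_square)
    have eB: "Bn \<rho> n = s^k + real k*(dd \<rho> - cc \<rho> + 2)"
      unfolding Bn_def absn unfolding nk using pwn[of k] by (simp add: algebra_simps power2_eq_square)
    have eC: "Cn \<rho> n = 1 - real k*cc \<rho> - ((real k)^2 - real k)*dd \<rho>"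
      unfolding Cn_def absn unfolding nk by (simp add: algebra_simps power2_eq_square)
    show ?thesis unfolding eA eB eC using P by simp
  next
    case False
    then have neg: "n \<le> -1" using assms(2,3) by linarith
    define k where "k = nat (-n)"
    have nk: "n = - int k" and k1: "k \<ge> 1" unfolding k_def using neg by auto
    have absn: "\<bar>n\<bar> = int k" using nk by simp
    have P: "s^k + real k*(cc \<rho>+2+dd \<rho>) > 0 \<and>
      r^k + real k*cc \<rho> - 2*real k + (2*(real k)^2 + real k)*dd \<rho> > 0 \<and>
      (1 + real k*cc \<rho> + ((real k)^2 + real k)*dd \<rho>)^2 <
        (s^k + real k*(cc \<rho>+2+dd \<rho>)) * (r^k + real k*cc \<rho> - 2*real k + (2*(real k)^2 + real k)*dd \<rho>)"
      unfolding cc dd using neg_case[OF r7 rs k1] by simp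
    have eA: "An \<rho> n = s^k + real k*(cc \<rho>+2+dd \<rho>)"
      unfolding An_def absn unfolding nk using pwn[of k] by (simp add: algebra_simps power2_eq_square)
    have eB: "Bn \<rho> n = r^k + real k*cc \<rho> - 2*real k + (2*(real k)^2 + real k)*dd \<rho>"
      unfolding Bn_def absn unfolding nk using pw[of k] by (simp add: algebra_simps power2_eq_square)
    have eC: "Cn \<rho> n = 1 + real k*cc \<rho> + ((real k)^2 + real k)*dd \<rho>"
      unfolding Cn_def absn unfolding nk by (simp add: algebra_simps power2_eq_square)
    show ?thesis unfolding eA eB eC using P by simp
  qed
  show ?thesis unfolding Qn_def using quad_pos[OF _ _ _ assms(4)] main by blast
qed

end
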